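(* Let $G$ be a graph and $f$ a local utility function such that $E[f(\overline{X})]\ge\beta$ when each $X_v$ is drawn independently from a distribution on $A$ depending only on the 1-hop neighbourhood of $v$. Then, given a legal $c$-coloring of $G$, there is a deterministic distributed algorithm in the CONGEST model running in $O(c)$ communication rounds that outputs an assignment $\overline{X}$ with $f(\overline{X})\ge\beta$.
   Context: Variables $X_v\in A$ (a finite set whose elements are encodable in $O(\log n)$ bits) for $v\in V$. $L_v[\overline{X}]$ is the restriction of an assignment to the neighbours of $v$, passed together with the 1-hop neighbourhood of $v$. $f$ is a local utility function if for every $v$ there is $g_v$ with $f(\overline{X}\cup\{X_v=\alpha\})-f(\overline{X}\cup\{X_v=\alpha'\})=g_v(L_v[\overline{X}],\alpha,\alpha')$ for all assignments $\overline{X}$ and $\alpha,\alpha'\in A$. CONGEST: synchronous rounds, $O(\log n)$-bit messages per edge per round. A legal coloring gives adjacent vertices different colors. *)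

theory Defs
  imports "HOL-Probability.Probability"
begin

(* Simple graph on a finite vertex set V \<subseteq> nat (vertex names serve as node IDs):
   E is symmetric, irreflexive and only relates vertices of V. *)
definition simple_graph :: "nat set \<Rightarrow> (nat \<Rightarrow> nat \<Rightarrow> bool) \<Rightarrow> bool" where
  "simple_graph V E \<longleftrightarrow> finite V \<and> (\<forall>u v. E u v \<longrightarrow> u \<in> V \<and> v \<in> V \<and> u \<noteq> v \<and> E v u)"

definition nbrs :: "nat set \<Rightarrow> (nat \<Rightarrow> nat \<Rightarrow> bool) \<Rightarrow> nat \<Rightarrow> nat set" where
  "nbrs V E v = {u \<in> V. E v u}"

definition legal_coloring :: "nat set \<Rightarrow> (nat \<Rightarrow> nat \<Rightarrow> bool) \<Rightarrow> nat \<Rightarrow> (nat \<Rightarrow> nat) \<Rightarrow> bool" where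
  "legal_coloring V E c col \<longleftrightarrow>
     (\<forall>v\<in>V. col v < c) \<and> (\<forall>u\<in>V. \<forall>v\<in>V. E u v \<longrightarrow> col u \<noteq> col v)"

definition assignment :: "nat set \<Rightarrow> 'a set \<Rightarrow> (nat \<Rightarrow> 'a) \<Rightarrow> bool" where
  "assignment V A X \<longleftrightarrow> (\<forall>v\<in>V. X v \<in> A) \<and> (\<forall>v. v \<notin> V \<longrightarrow> X v = undefined)"

definition restr_nbrs :: "nat set \<Rightarrow> (nat \<Rightarrow> nat \<Rightarrow> bool) \<Rightarrow> nat \<Rightarrow> (nat \<Rightarrow> 'a) \<Rightarrow> (nat \<Rightarrow> 'a)" where
  "restr_nbrs V E v X = (\<lambda>u. if u \<in> nbrs V E v then X u else undefined)"

definition local_utility_wrt ::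
  "nat set \<Rightarrow> (nat \<Rightarrow> nat \<Rightarrow> bool) \<Rightarrow> 'a set \<Rightarrow> ((nat \<Rightarrow> 'a) \<Rightarrow> real)
     \<Rightarrow> (nat \<Rightarrow> (nat \<Rightarrow> 'a) \<Rightarrow> 'a \<Rightarrow> 'a \<Rightarrow> real) \<Rightarrow> bool" where
  "local_utility_wrt V E A f g \<longleftrightarrow>
     (\<forall>v\<in>V. \<forall>X. assignment V A X \<longrightarrow> (\<forall>\<alpha>\<in>A. \<forall>\<alpha>'\<in>A.
        f (X(v := \<alpha>)) - f (X(v := \<alpha>')) = g v (restr_nbrs V E v X) \<alpha> \<alpha>'))"

definition local_utility ::
  "nat set \<Rightarrow> (nat \<Rightarrow> nat \<Rightarrow> bool) \<Rightarrow> 'a set \<Rightarrow> ((nat \<Rightarrow> 'a) \<Rightarrow> real) \<Rightarrow> bool" where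
  "local_utility V E A f \<longleftrightarrow> (\<exists>g. local_utility_wrt V E A f g)"

record 'a local_input =
  li_n      :: nat
  li_A      :: "'a set"
  li_enc    :: "'a \<Rightarrow> bool list"
  li_c      :: nat
  li_id     :: nat
  li_color  :: nat
  li_nbrs   :: "nat set"
  li_util   :: "(nat \<Rightarrow> 'a) \<Rightarrow> 'a \<Rightarrow> 'a \<Rightarrow> real"
  li_dists  :: "nat \<Rightarrow> 'a pmf"

(* knowledge after r rounds: initial input and the list of received message vectors
   (round i: sender ID \<mapsto> message; [] for non-neighbours) *)
type_synonym 'a knowledge = "'a local_input \<times> (nat \<Rightarrow> bool list) list"

record 'a congest_alg =
  alg_send :: "'a knowledge \<Rightarrow> nat \<Rightarrow> bool list"
  alg_out  :: "'a knowledge \<Rightarrow> 'a"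

primrec run :: "'a congest_alg \<Rightarrow> (nat \<Rightarrow> nat set) \<Rightarrow> (nat \<Rightarrow> 'a local_input) \<Rightarrow> nat
                 \<Rightarrow> nat \<Rightarrow> 'a knowledge" where
  "run alg N inp 0 = (\<lambda>v. (inp v, []))"
| "run alg N inp (Suc r) =
     (\<lambda>v. (fst (run alg N inp r v),
           snd (run alg N inp r v) @
             [(\<lambda>u. if u \<in> N v then alg_send alg (run alg N inp r u) v else [])]))"

definition node_input ::
  "nat set \<Rightarrow> (nat \<Rightarrow> nat \<Rightarrow> bool) \<Rightarrow> 'a set \<Rightarrow> ('a \<Rightarrow> bool list) \<Rightarrow> nat \<Rightarrow> (nat \<Rightarrow> nat)
    \<Rightarrow> (nat \<Rightarrow> (nat \<Rightarrow> 'a) \<Rightarrow> 'a \<Rightarrow> 'a \<Rightarrow> real) \<Rightarrow> (nat \<Rightarrow> 'a pmf) \<Rightarrow> nat \<Rightarrow> 'a local_input" where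
  "node_input V E A enc c col g p v =
     \<lparr> li_n = card V, li_A = A, li_enc = enc, li_c = c, li_id = v, li_color = col v,
       li_nbrs = nbrs V E v, li_util = g v,
       li_dists = (\<lambda>u. if u \<in> insert v (nbrs V E v) then p u else return_pmf undefined) \<rparr>"

definition congest_bounded ::
  "real \<Rightarrow> nat \<Rightarrow> 'a congest_alg \<Rightarrow> nat set \<Rightarrow> (nat \<Rightarrow> nat set) \<Rightarrow> (nat \<Rightarrow> 'a local_input) \<Rightarrow> bool" where
  "congest_bounded B R alg V N inp \<longleftrightarrow>
     (\<forall>r<R. \<forall>v\<in>V. \<forall>u\<in>N v.
        real (length (alg_send alg (run alg N inp r v) u)) \<le> B * log 2 (real (card V)))"

definition alg_output ::
  "'a congest_alg \<Rightarrow> nat set \<Rightarrow> (nat \<Rightarrow> nat set) \<Rightarrow> (nat \<Rightarrow> 'a local_input) \<Rightarrow> nat \<Rightarrow> (nat \<Rightarrow> 'a)" where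
  "alg_output alg V N inp R = (\<lambda>v. if v \<in> V then alg_out alg (run alg N inp R v) else undefined)"

end

theory Submission
  imports Defs
begin


lemma single_node:
  fixes q :: "nat \<Rightarrow> 'a pmf" and f :: "(nat \<Rightarrow> 'a) \<Rightarrow> real"
  assumes V: "finite V" and Af: "finite A" and vV: "v \<in> V"
    and qA: "\<forall>u\<in>V. set_pmf (q u) \<subseteq> A"
    and lu: "local_utility_wrt V E A f g"
    and nv: "v \<notin> nbrs V E v" and nV: "nbrs V E v \<subseteq> V"
    and a0: "a0 \<in> A" and aA: "a \<in> A"
    and amax: "\<forall>b\<in>A. measure_pmf.expectation (Pi_pmf (nbrs V E v) undefined q) (\<lambda>L. g v L b a0)
                \<le> measure_pmf.expectation (Pi_pmf (nbrs V E v) undefined q) (\<lambda>L. g v L a a0)"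
  shows "measure_pmf.expectation (Pi_pmf V undefined q) f
         \<le> measure_pmf.expectation (Pi_pmf V undefined (q(v := return_pmf a))) f"
proof -
  define W where "W = V - {v}"
  have VW: "V = insert v W" and vW: "v \<notin> W" and Wf: "finite W" using vV V by (auto simp: W_def)
  define P where "P = Pi_pmf W undefined q"
  have finP: "finite (set_pmf P)"
  proof -
    have "set_pmf P \<subseteq> PiE_dflt W undefined (set_pmf \<circ> q)"
      unfolding P_def by (rule set_Pi_pmf_subset'[OF Wf])
    moreover have "finite (PiE_dflt W undefined (set_pmf \<circ> q))"
      using Wf qA Af VW by (intro finite_PiE_dflt) (auto intro: finite_subset)
    ultimately show ?thesis by (rule finite_subset)
  qed
  have Pset: "\<And>X. X \<in> set_pmf P \<Longrightarrow> (\<forall>u\<in>W. X u \<in> A) \<and> (\<forall>u. u \<notin> W \<longrightarrow> X u = undefined)"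
  proof -
    fix X assume "X \<in> set_pmf P"
    then have "X \<in> PiE_dflt W undefined (set_pmf \<circ> q)"
      using set_Pi_pmf_subset'[OF Wf, of undefined q] unfolding P_def by blast
    then show "(\<forall>u\<in>W. X u \<in> A) \<and> (\<forall>u. u \<notin> W \<longrightarrow> X u = undefined)"
      using qA VW by (auto simp: PiE_dflt_def)
  qed
  define h where "h b = measure_pmf.expectation P (\<lambda>X. f (X(v := b)))" for b
  have gen: "measure_pmf.expectation (Pi_pmf V undefined q') f = (\<Sum>b\<in>A. pmf (q' v) b * h b)"
    if q'W: "\<And>u. u \<in> W \<Longrightarrow> q' u = q u" and q'A: "set_pmf (q' v) \<subseteq> A" for q'
  proof -
    have PP: "Pi_pmf W undefined q' = P" unfolding P_def using q'W by (intro Pi_pmf_cong) auto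
    have "Pi_pmf V undefined q' = q' v \<bind> (\<lambda>y. map_pmf (\<lambda>X. X(v := y)) P)"
      unfolding VW using Pi_pmf_insert'[OF Wf vW, of undefined q'] PP
      by (simp add: map_pmf_def)
    then have "measure_pmf.expectation (Pi_pmf V undefined q') f =
       (\<Sum>b\<in>A. pmf (q' v) b *\<^sub>R measure_pmf.expectation (map_pmf (\<lambda>X. X(v := b)) P) f)"
      using Af q'A finP by (simp add: pmf_expectation_bind[of A])
    then show ?thesis by (simp add: h_def)
  qed
  have e1: "measure_pmf.expectation (Pi_pmf V undefined q) f = (\<Sum>b\<in>A. pmf (q v) b * h b)"
    using gen[of q] qA vV by auto
  have e2: "measure_pmf.expectation (Pi_pmf V undefined (q(v := return_pmf a))) f = h a"
  proof -
    have "measure_pmf.expectation (Pi_pmf V undefined (q(v := return_pmf a))) f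
       = (\<Sum>b\<in>A. pmf (return_pmf a) b * h b)"
      using gen[of "q(v := return_pmf a)"] vW aA unfolding fun_upd_same
      by (metis fun_upd_other set_return_pmf empty_subsetI insert_subset)
    also have "\<dots> = (\<Sum>b\<in>A. (if b = a then h b else 0))"
      by (intro sum.cong) (auto simp: indicator_def)
    also have "\<dots> = h a" using Af aA by simp
    finally show ?thesis .
  qed
  define D where "D = Pi_pmf (nbrs V E v) undefined q"
  have hdiff: "h b - h a0 = measure_pmf.expectation D (\<lambda>L. g v L b a0)" if bA: "b \<in> A" for b
  proof -
    have "h b - h a0 = measure_pmf.expectation P (\<lambda>X. f (X(v := b)) - f (X(v := a0)))"
      unfolding h_def using finP
      by (simp add: integrable_measure_pmf_finite Bochner_Integration.integral_diff)
    also have "\<dots> = measure_pmf.expectation P (\<lambda>X. g v (restr_nbrs V E v X) b a0)"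
    proof (intro integral_cong_AE)
      show "AE X in measure_pmf P. f (X(v := b)) - f (X(v := a0)) = g v (restr_nbrs V E v X) b a0"
      proof (rule AE_pmfI)
        fix X assume XP: "X \<in> set_pmf P"
        have asg: "assignment V A (X(v := a0))"
          using Pset[OF XP] a0 VW unfolding assignment_def by auto
        have "f ((X(v := a0))(v := b)) - f ((X(v := a0))(v := a0)) = g v (restr_nbrs V E v (X(v := a0))) b a0"
          using lu vV asg bA a0 unfolding local_utility_wrt_def by blast
        moreover have "restr_nbrs V E v (X(v := a0)) = restr_nbrs V E v X"
          using nv unfolding restr_nbrs_def by auto
        ultimately show "f (X(v := b)) - f (X(v := a0)) = g v (restr_nbrs V E v X) b a0" by simp
      qed
    qed auto
    also have "\<dots> = measure_pmf.expectation D (\<lambda>L. g v L b a0)"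
    proof -
      have "D = map_pmf (\<lambda>X x. if x \<in> nbrs V E v then X x else undefined) P"
        unfolding D_def P_def using nV nv Wf by (intro Pi_pmf_subset) (auto simp: W_def)
      then show ?thesis by (simp add: restr_nbrs_def)
    qed
    finally show ?thesis .
  qed
  have hmax: "\<forall>b\<in>A. h b \<le> h a"
  proof
    fix b assume bA: "b \<in> A"
    have "h b - h a0 \<le> h a - h a0" using amax bA hdiff[OF bA] hdiff[OF aA] unfolding D_def by simp
    then show "h b \<le> h a" by simp
  qed
  have "(\<Sum>b\<in>A. pmf (q v) b * h b) \<le> (\<Sum>b\<in>A. pmf (q v) b * h a)"
    using hmax by (intro sum_mono mult_left_mono) auto
  also have "\<dots> = h a"
    using sum_pmf_eq_1[OF Af, of "q v"] qA vV by (simp add: sum_distrib_right[symmetric])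
  finally show ?thesis using e1 e2 by simp
qed



definition decode :: "'a local_input \<Rightarrow> bool list \<Rightarrow> 'a" where
  "decode inp m = inv_into (li_A inp) (li_enc inp) (tl m)"

definition known :: "'a knowledge \<Rightarrow> nat \<Rightarrow> 'a option" where
  "known K u = (if \<exists>m\<in>set (snd K). m u \<noteq> []
     then Some (decode (fst K) ((SOME m. m \<in> set (snd K) \<and> m u \<noteq> []) u)) else None)"

definition nbr_dist :: "'a knowledge \<Rightarrow> (nat \<Rightarrow> 'a) pmf" where
  "nbr_dist K = Pi_pmf (li_nbrs (fst K)) undefined
     (\<lambda>u. case known K u of Some a \<Rightarrow> return_pmf a | None \<Rightarrow> li_dists (fst K) u)"

definition phi :: "'a knowledge \<Rightarrow> 'a \<Rightarrow> real" where
  "phi K b = measure_pmf.expectation (nbr_dist K)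
      (\<lambda>L. li_util (fst K) L b (SOME a. a \<in> li_A (fst K)))"

definition pick :: "'a knowledge \<Rightarrow> 'a" where
  "pick K = (SOME a. a \<in> li_A (fst K) \<and> (\<forall>b\<in>li_A (fst K). phi K b \<le> phi K a))"

definition myalg :: "'a congest_alg" where
  "myalg = \<lparr> alg_send = (\<lambda>K w. if length (snd K) = li_color (fst K)
                               then True # li_enc (fst K) (pick K) else []),
             alg_out = (\<lambda>K. pick (fst K, take (li_color (fst K)) (snd K))) \<rparr>"

lemma pick_spec:
  assumes "finite (li_A (fst K))" "li_A (fst K) \<noteq> {}"
  shows "pick K \<in> li_A (fst K) \<and> (\<forall>b\<in>li_A (fst K). phi K b \<le> phi K (pick K))"
proof -
  let ?A = "li_A (fst K)"
  have "Max (phi K ` ?A) \<in> phi K ` ?A" using assms by (intro Max_in) auto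
  then obtain a where a: "a \<in> ?A" "phi K a = Max (phi K ` ?A)" by auto
  have "\<forall>b\<in>?A. phi K b \<le> phi K a" using a assms by auto
  then have "\<exists>a. a \<in> ?A \<and> (\<forall>b\<in>?A. phi K b \<le> phi K a)" using a by blast
  then show ?thesis unfolding pick_def by (rule someI_ex)
qed

lemma run_eq:
  "run alg N inp r v = (inp v, map (\<lambda>j u. if u \<in> N v then alg_send alg (run alg N inp j u) v else []) [0..<r])"
  by (induction r arbitrary: v) auto



lemma main_lemma:
  fixes C :: real and V :: "nat set" and E :: "nat \<Rightarrow> nat \<Rightarrow> bool" and A :: "'a set"
    and enc :: "'a \<Rightarrow> bool list" and c :: nat and col :: "nat \<Rightarrow> nat" and f :: "(nat \<Rightarrow> 'a) \<Rightarrow> real"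
    and g :: "nat \<Rightarrow> (nat \<Rightarrow> 'a) \<Rightarrow> 'a \<Rightarrow> 'a \<Rightarrow> real" and p :: "nat \<Rightarrow> 'a pmf" and \<beta> :: real
  assumes H: "simple_graph V E \<and> card V \<ge> 2 \<and>
       finite A \<and> inj_on enc A \<and>
       (\<forall>a\<in>A. real (length (enc a)) \<le> C * log 2 (real (card V))) \<and>
       legal_coloring V E c col \<and>
       local_utility_wrt V E A f g \<and>
       (\<forall>v\<in>V. set_pmf (p v) \<subseteq> A) \<and>
       measure_pmf.expectation (Pi_pmf V undefined p) f \<ge> \<beta>"
  shows "congest_bounded (1 + \<bar>C\<bar>) (1 * c) myalg V (nbrs V E) (node_input V E A enc c col g p) \<and>
          f (alg_output myalg V (nbrs V E) (node_input V E A enc c col g p) (1 * c)) \<ge> \<beta>"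
proof -
  define inp where "inp = node_input V E A enc c col g p"
  define N where "N = nbrs V E"
  from H have sg: "simple_graph V E" and cV: "card V \<ge> 2" and Af: "finite A" and inj: "inj_on enc A"
    and encl: "\<forall>a\<in>A. real (length (enc a)) \<le> C * log 2 (real (card V))"
    and lc: "legal_coloring V E c col" and lu: "local_utility_wrt V E A f g"
    and pA: "\<forall>v\<in>V. set_pmf (p v) \<subseteq> A" and Eb: "measure_pmf.expectation (Pi_pmf V undefined p) f \<ge> \<beta>"
    by auto
  have Vf: "finite V" using sg unfolding simple_graph_def by auto
  have Vne: "V \<noteq> {}" using cV by auto
  have Ane: "A \<noteq> {}"
  proof -
    obtain v where "v \<in> V" using Vne by auto
    then show ?thesis using pA set_pmf_not_empty[of "p v"] by blast
  qed
  have colc: "\<forall>v\<in>V. col v < c" using lc unfolding legal_coloring_def by auto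
  have colne: "\<And>u v. v \<in> V \<Longrightarrow> u \<in> nbrs V E v \<Longrightarrow> col u \<noteq> col v"
  proof -
    fix u v assume "v \<in> V" "u \<in> nbrs V E v"
    then have "u \<in> V" "E v u" unfolding nbrs_def by auto
    then show "col u \<noteq> col v" using lc \<open>v \<in> V\<close> unfolding legal_coloring_def by metis
  qed
  have nv: "\<And>v. v \<notin> nbrs V E v" using sg unfolding nbrs_def simple_graph_def by auto
  have nV: "\<And>v. nbrs V E v \<subseteq> V" unfolding nbrs_def by auto
  have alg_send_eq: "\<And>K w. alg_send myalg K w = (if length (snd K) = li_color (fst K)
                               then True # li_enc (fst K) (pick K) else [])" by (simp add: myalg_def)
  have alg_out_eq: "\<And>K. alg_out myalg K = pick (fst K, take (li_color (fst K)) (snd K))"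
    by (simp add: myalg_def)
  have fst_run: "\<And>r v. fst (run myalg N inp r v) = inp v" by (subst run_eq) simp
  have inpA: "\<And>v. li_A (inp v) = A" and inpE: "\<And>v. li_enc (inp v) = enc"
    and inpC: "\<And>v. li_color (inp v) = col v" and inpN: "\<And>v. li_nbrs (inp v) = nbrs V E v"
    and inpU: "\<And>v. li_util (inp v) = g v"
    and inpD: "\<And>v u. u \<in> nbrs V E v \<Longrightarrow> li_dists (inp v) u = p u"
    and inpn: "\<And>v. li_n (inp v) = card V"
    by (auto simp: inp_def node_input_def)
  define val where "val u = pick (run myalg N inp (col u) u)" for u
  have pickA: "\<And>r v. pick (run myalg N inp r v) \<in> A"
    using pick_spec[of "run myalg N inp _ _"] fst_run inpA Af Ane by metis
  have valA: "\<And>u. val u \<in> A" unfolding val_def by (rule pickA)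
  define F where "F v j = (\<lambda>u. if u \<in> N v then alg_send myalg (run myalg N inp j u) v else [])" for v j
  have snd_run: "\<And>r v. snd (run myalg N inp r v) = map (F v) [0..<r]"
    by (subst run_eq) (simp add: F_def)
  have runpair: "\<And>r v. run myalg N inp r v = (inp v, map (F v) [0..<r])"
    by (simp add: prod_eq_iff fst_run snd_run)
  have send: "\<And>j u w. alg_send myalg (run myalg N inp j u) w = (if j = col u then True # enc (val u) else [])"
    by (simp add: alg_send_eq snd_run fst_run inpC inpE val_def)
  have Fu: "\<And>v u j. u \<in> N v \<Longrightarrow> F v j u = (if j = col u then True # enc (val u) else [])"
    by (simp add: F_def send)
  have dec: "\<And>v u. decode (inp v) (True # enc (val u)) = val u"
    by (simp add: decode_def inpA inpE inv_into_f_f[OF inj valA])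
  have known_eq: "known (run myalg N inp (col v) v) u = (if col u < col v then Some (val u) else None)"
    if uN: "u \<in> nbrs V E v" for u v
  proof -
    have uN': "u \<in> N v" using uN by (simp add: N_def)
    let ?ms = "map (F v) [0..<col v]"
    have ex: "(\<exists>m\<in>set ?ms. m u \<noteq> []) \<longleftrightarrow> col u < col v"
      using Fu[OF uN'] by auto
    show ?thesis
    proof (cases "col u < col v")
      case True
      then have "\<exists>m. m \<in> set ?ms \<and> m u \<noteq> []" using ex by auto
      then have sm: "(SOME m. m \<in> set ?ms \<and> m u \<noteq> []) \<in> set ?ms \<and> (SOME m. m \<in> set ?ms \<and> m u \<noteq> []) u \<noteq> []"
        by (rule someI_ex)
      then have "(SOME m. m \<in> set ?ms \<and> m u \<noteq> []) u = True # enc (val u)"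
        using Fu[OF uN'] by (auto split: if_splits)
      then show ?thesis using True ex unfolding known_def snd_run fst_run by (simp add: dec)
    next
      case False
      then show ?thesis using ex unfolding known_def snd_run fst_run by simp
    qed
  qed
  define Dv where "Dv v = Pi_pmf (nbrs V E v) undefined (\<lambda>u. if col u < col v then return_pmf (val u) else p u)" for v
  have distv: "nbr_dist (run myalg N inp (col v) v) = Dv v" for v
    unfolding nbr_dist_def fst_run inpN Dv_def
    by (intro Pi_pmf_cong) (auto simp: known_eq inpD)
  define a0 where "a0 = (SOME a. a \<in> A)"
  have a0A: "a0 \<in> A" unfolding a0_def using Ane by (simp add: some_in_eq)
  have valmax: "\<forall>b\<in>A. measure_pmf.expectation (Dv v) (\<lambda>L. g v L b a0)
       \<le> measure_pmf.expectation (Dv v) (\<lambda>L. g v L (val v) a0)" for v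
    using pick_spec[of "run myalg N inp (col v) v"] Af Ane
    unfolding val_def phi_def fst_run inpA inpU distv a0_def by auto
  define Q where "Q t T = Pi_pmf V undefined (\<lambda>u. if col u < t \<or> u \<in> T then return_pmf (val u) else p u)" for t T
  have step1: "measure_pmf.expectation (Q t T) f \<le> measure_pmf.expectation (Q t (insert v T)) f"
    if vV: "v \<in> V" and cv: "col v = t" and T: "T \<subseteq> {u. col u = t}" for v t T
  proof -
    define q where "q = (\<lambda>u. if col u < t \<or> u \<in> T then return_pmf (val u) else p u)"
    have qA: "\<forall>u\<in>V. set_pmf (q u) \<subseteq> A" using pA valA by (auto simp: q_def)
    have D: "Pi_pmf (nbrs V E v) undefined q = Dv v"
      unfolding Dv_def q_def using colne[OF vV] T cv by (intro Pi_pmf_cong) auto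
    have "measure_pmf.expectation (Pi_pmf V undefined q) f
         \<le> measure_pmf.expectation (Pi_pmf V undefined (q(v := return_pmf (val v)))) f"
      by (rule single_node[OF Vf Af vV qA lu nv nV a0A valA]) (use valmax D in simp)
    moreover have "q(v := return_pmf (val v)) = (\<lambda>u. if col u < t \<or> u \<in> insert v T then return_pmf (val u) else p u)"
      by (auto simp: q_def)
    ultimately show ?thesis unfolding Q_def q_def by simp
  qed
  have stepT: "finite T \<Longrightarrow> T \<subseteq> {u\<in>V. col u = t} \<Longrightarrow> measure_pmf.expectation (Q t {}) f \<le> measure_pmf.expectation (Q t T) f" for T t
  proof (induction T rule: finite_induct)
    case empty then show ?case by simp
  next
    case (insert v T)
    then have "measure_pmf.expectation (Q t T) f \<le> measure_pmf.expectation (Q t (insert v T)) f"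
      by (intro step1) auto
    with insert show ?case by auto
  qed
  have stept: "measure_pmf.expectation (Q t {}) f \<le> measure_pmf.expectation (Q (Suc t) {}) f" for t
  proof -
    have "Q t {u\<in>V. col u = t} = Q (Suc t) {}" unfolding Q_def by (intro Pi_pmf_cong) auto
    then show ?thesis using stepT[of "{u\<in>V. col u = t}" t] Vf by auto
  qed
  have mono: "measure_pmf.expectation (Q 0 {}) f \<le> measure_pmf.expectation (Q t {}) f" for t
  proof (induction t)
    case (Suc t) then show ?case using stept[of t] by linarith
  qed simp
  have Q0: "Q 0 {} = Pi_pmf V undefined p" unfolding Q_def by simp
  have Qc: "Q c {} = return_pmf (\<lambda>x. if x \<in> V then val x else undefined)"
  proof -
    have "Q c {} = Pi_pmf V undefined (\<lambda>u. return_pmf (val u))"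
      unfolding Q_def using colc by (intro Pi_pmf_cong) auto
    then show ?thesis using Vf by simp
  qed
  have out: "alg_output myalg V N inp (1 * c) = (\<lambda>x. if x \<in> V then val x else undefined)"
  proof
    fix x show "alg_output myalg V N inp (1 * c) x = (if x \<in> V then val x else undefined)"
    proof (cases "x \<in> V")
      case True
      have "take (col x) (map (F x) [0..<c]) = map (F x) [0..<col x]"
        using colc True by (simp add: take_map less_imp_le)
      then show ?thesis using True
        by (simp add: alg_output_def alg_out_eq val_def snd_run fst_run inpC runpair[of "col x" x])
    qed (simp add: alg_output_def)
  qed
  have fgood: "f (alg_output myalg V N inp (1 * c)) \<ge> \<beta>"
    using Eb mono[of c] Q0 Qc out by simp
  have logn: "log 2 (real (card V)) \<ge> 1" using cV by simp
  have cb: "congest_bounded (1 + \<bar>C\<bar>) (1 * c) myalg V N inp"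
    unfolding congest_bounded_def
  proof (intro allI impI ballI)
    fix r v u assume "r < 1 * c" "v \<in> V" "u \<in> N v"
    have e: "real (length (enc (val v))) \<le> C * log 2 (real (card V))" using encl valA by blast
    have e2: "C * log 2 (real (card V)) \<le> \<bar>C\<bar> * log 2 (real (card V))"
      using logn by (intro mult_right_mono) auto
    have "real (length (alg_send myalg (run myalg N inp r v) u)) \<le> 1 + \<bar>C\<bar> * log 2 (real (card V))"
    proof -
      have "real (length (alg_send myalg (run myalg N inp r v) u)) \<le> 1 + real (length (enc (val v)))"
        unfolding send by simp
      then show ?thesis using e e2 by linarith
    qed
    also have "\<dots> \<le> (1 + \<bar>C\<bar>) * log 2 (real (card V))" using logn by (simp add: algebra_simps)
    finally show "real (length (alg_send myalg (run myalg N inp r v) u)) \<le> (1 + \<bar>C\<bar>) * log 2 (real (card V))" .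
  qed
  show ?thesis using cb fgood unfolding inp_def N_def by simp
qed

theorem mainTheorem6:
  fixes C :: real
  shows "\<exists>(K::nat) (B::real) (alg :: 'a congest_alg).
     \<forall>(V::nat set) E (A::'a set) (enc :: 'a \<Rightarrow> bool list) (c::nat) col
       (f :: (nat \<Rightarrow> 'a) \<Rightarrow> real) g (p :: nat \<Rightarrow> 'a pmf) (\<beta>::real).
       simple_graph V E \<and> card V \<ge> 2 \<and>
       finite A \<and> inj_on enc A \<and>
       (\<forall>a\<in>A. real (length (enc a)) \<le> C * log 2 (real (card V))) \<and>
       legal_coloring V E c col \<and>
       local_utility_wrt V E A f g \<and>
       (\<forall>v\<in>V. set_pmf (p v) \<subseteq> A) \<and>
       measure_pmf.expectation (Pi_pmf V undefined p) f \<ge> \<beta>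
       \<longrightarrow>
       (let inp = node_input V E A enc c col g p; N = nbrs V E in
          congest_bounded B (K * c) alg V N inp \<and>
          f (alg_output alg V N inp (K * c)) \<ge> \<beta>)"
  unfolding Let_def
  by (intro exI[of _ 1] exI[of _ "1 + \<bar>C\<bar>"] exI[of _ myalg] allI impI main_lemma) assumption

end
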